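(* Let $\mathbb{K}=(G_{\mathbb{K}},M_{\mathbb{K}},I_{\mathbb{K}})$ and $\mathbb{S}=(G_{\mathbb{S}},M_{\mathbb{S}},I_{\mathbb{S}})$ be formal contexts and $\sigma\colon G_{\mathbb{K}}\to G_{\mathbb{S}}$ a map. Then there exist a formal context $\mathbb{T}=(G_{\mathbb{T}},M_{\mathbb{T}},I_{\mathbb{T}})$ and a map $\psi\colon G_{\mathbb{K}}\to G_{\mathbb{T}}$ such that $\psi$ is a $\mathbb{T}$-measure of $\mathbb{K}$ and $\{\psi^{-1}(A)\mid A\in \mathrm{Ext}(\mathbb{T})\}=\{\sigma^{-1}(A)\mid A\in\mathrm{Ext}(\mathbb{S})\}\cap \mathrm{Ext}(\mathbb{K})$.
   Context: A formal context is a triple $(G,M,I)$ with $G$ a non-empty finite set (objects), $M$ a finite set (attributes) and $I\subseteq G\times M$. For $A\subseteq G$ let $A'=\{m\in M\mid \forall a\in A: (a,m)\in I\}$ and for $B\subseteq M$ let $B'=\{g\in G\mid \forall b\in B:(g,b)\in I\}$. An extent of $(G,M,I)$ is a set $A\subseteq G$ with $A''=A$; $\mathrm{Ext}(G,M,I)$ denotes the set of all extents. For a map $\sigma$, $\sigma^{-1}(A)$ denotes the preimage of $A$. For formal contexts $\mathbb{K}=(G,M,I)$ and $\mathbb{T}=(G_{\mathbb{T}},M_{\mathbb{T}},I_{\mathbb{T}})$, a map $\psi\colon G\to G_{\mathbb{T}}$ is a $\mathbb{T}$-measure of $\mathbb{K}$ iff for every $A\in\mathrm{Ext}(\mathbb{T})$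 the preimage $\psi^{-1}(A)$ is in $\mathrm{Ext}(\mathbb{K})$. *)

theory Defs
  imports Main
begin

definition formal_context :: "'g set \<Rightarrow> 'm set \<Rightarrow> ('g \<times> 'm) set \<Rightarrow> bool" where
  "formal_context G M I \<longleftrightarrow> G \<noteq> {} \<and> finite G \<and> finite M \<and> I \<subseteq> G \<times> M"

definition obj_deriv :: "'g set \<Rightarrow> 'm set \<Rightarrow> ('g \<times> 'm) set \<Rightarrow> 'g set \<Rightarrow> 'm set" where
  "obj_deriv G M I A = {m \<in> M. \<forall>a \<in> A. (a, m) \<in> I}"

definition attr_deriv :: "'g set \<Rightarrow> 'm set \<Rightarrow> ('g \<times> 'm) set \<Rightarrow> 'm set \<Rightarrow> 'g set" where
  "attr_deriv G M I B = {g \<in> G. \<forall>b \<in> B. (g, b) \<in> I}"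

definition extents :: "'g set \<Rightarrow> 'm set \<Rightarrow> ('g \<times> 'm) set \<Rightarrow> 'g set set" where
  "extents G M I = {A. attr_deriv G M I (obj_deriv G M I A) = A}"

definition preim :: "'g set \<Rightarrow> ('g \<Rightarrow> 'h) \<Rightarrow> 'h set \<Rightarrow> 'g set" where
  "preim G f A = {g \<in> G. f g \<in> A}"

definition is_measure ::
  "'g set \<Rightarrow> 'm set \<Rightarrow> ('g \<times> 'm) set \<Rightarrow> 'h set \<Rightarrow> 'n set \<Rightarrow> ('h \<times> 'n) set \<Rightarrow> ('g \<Rightarrow> 'h) \<Rightarrow> bool" where
  "is_measure G M I GT MT IT psi \<longleftrightarrow>
     (\<forall>g \<in> G. psi g \<in> GT) \<and> (\<forall>A \<in> extents GT MT IT. preim G psi A \<in> extents G M I)"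

end

theory Submission
  imports Defs
begin

lemma ext_sub: "A \<in> extents G M I \<Longrightarrow> A \<subseteq> G"
  unfolding extents_def attr_deriv_def by auto

lemma ext_top: "G \<in> extents G M I"
  unfolding extents_def attr_deriv_def obj_deriv_def by auto

lemma ext_inter:
  assumes "\<A> \<noteq> {}" "\<A> \<subseteq> extents G M I"
  shows "\<Inter>\<A> \<in> extents G M I"
proof -
  have sub: "\<Inter>\<A> \<subseteq> G" using assms ext_sub by blast
  have "attr_deriv G M I (obj_deriv G M I (\<Inter>\<A>)) \<subseteq> A" if "A \<in> \<A>" for A
  proof -
    have "A = attr_deriv G M I (obj_deriv G M I A)" using that assms unfolding extents_def by auto
    moreover have "attr_deriv G M I (obj_deriv G M I (\<Inter>\<A>)) \<subseteq> attr_deriv G M I (obj_deriv G M I A)"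
      using that unfolding attr_deriv_def obj_deriv_def by blast
    ultimately show ?thesis by simp
  qed
  moreover have "\<Inter>\<A> \<subseteq> attr_deriv G M I (obj_deriv G M I (\<Inter>\<A>))"
    using sub unfolding attr_deriv_def obj_deriv_def by blast
  ultimately show ?thesis unfolding extents_def by blast
qed

lemma closure_ext:
  assumes F: "F \<subseteq> Pow G" "G \<in> F" "\<And>\<C>. \<C> \<noteq> {} \<Longrightarrow> \<C> \<subseteq> F \<Longrightarrow> \<Inter>\<C> \<in> F"
  shows "extents G F {(g, C). g \<in> C \<and> C \<in> F} = F"
proof -
  have eq: "attr_deriv G F {(g, C). g \<in> C \<and> C \<in> F} (obj_deriv G F {(g, C). g \<in> C \<and> C \<in> F} B)
     = {g \<in> G. \<forall>C\<in>F. B \<subseteq> C \<longrightarrow> g \<in> C}" for B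
    unfolding attr_deriv_def obj_deriv_def by auto
  show ?thesis
  proof (intro equalityI subsetI)
    fix B assume "B \<in> extents G F {(g, C). g \<in> C \<and> C \<in> F}"
    hence B: "B = {g \<in> G. \<forall>C\<in>F. B \<subseteq> C \<longrightarrow> g \<in> C}" unfolding extents_def eq by simp
    hence "B \<subseteq> G" by blast
    hence "B = \<Inter>{C \<in> F. B \<subseteq> C}" using B F(1,2) by blast
    moreover have "\<Inter>{C \<in> F. B \<subseteq> C} \<in> F" using F(3)[of "{C \<in> F. B \<subseteq> C}"] \<open>B \<subseteq> G\<close> F(2) by blast
    ultimately show "B \<in> F" by simp
  next
    fix B assume "B \<in> F"
    hence "{g \<in> G. \<forall>C\<in>F. B \<subseteq> C \<longrightarrow> g \<in> C} = B" using F(1) by blast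
    thus "B \<in> extents G F {(g, C). g \<in> C \<and> C \<in> F}" unfolding extents_def eq by simp
  qed
qed

theorem corollary1:
  fixes GK :: "'g set" and MK :: "'m set" and IK :: "('g \<times> 'm) set"
    and GS :: "'h set" and MS :: "'n set" and IS :: "('h \<times> 'n) set"
    and \<sigma> :: "'g \<Rightarrow> 'h"
  assumes "formal_context GK MK IK"
    and "formal_context GS MS IS"
    and "\<forall>g \<in> GK. \<sigma> g \<in> GS"
  shows "\<exists>(GT :: 'g set) (MT :: 'g set set) (IT :: ('g \<times> 'g set) set) (\<psi> :: 'g \<Rightarrow> 'g).
           formal_context GT MT IT \<and>
           is_measure GK MK IK GT MT IT \<psi> \<and>
           (\<lambda>A. preim GK \<psi> A) ` extents GT MT IT
             = ((\<lambda>A. preim GK \<sigma> A) ` extents GS MS IS) \<inter> extents GK MK IK"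
proof -
  define F where "F = ((\<lambda>A. preim GK \<sigma> A) ` extents GS MS IS) \<inter> extents GK MK IK"
  define IT where "IT = {(g, C). g \<in> C \<and> C \<in> F}"
  have FP: "F \<subseteq> Pow GK" unfolding F_def using ext_sub[of _ GK MK IK] by blast
  have GKF: "GK \<in> F"
  proof -
    have "preim GK \<sigma> GS = GK" using assms(3) unfolding preim_def by auto
    hence "GK \<in> (\<lambda>A. preim GK \<sigma> A) ` extents GS MS IS" using ext_top[of GS MS IS] by (metis image_eqI)
    thus ?thesis unfolding F_def using ext_top[of GK MK IK] by blast
  qed
  have FI: "\<Inter>\<C> \<in> F" if ne: "\<C> \<noteq> {}" and sub: "\<C> \<subseteq> F" for \<C>
  proof -
    define \<A> where "\<A> = {A \<in> extents GS MS IS. preim GK \<sigma> A \<in> \<C>}"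
    have "\<A> \<noteq> {}"
    proof -
      obtain C where "C \<in> \<C>" using ne by blast
      hence "C \<in> (\<lambda>A. preim GK \<sigma> A) ` extents GS MS IS" using sub unfolding F_def by blast
      then obtain A where "A \<in> extents GS MS IS" "C = preim GK \<sigma> A" by blast
      hence "A \<in> \<A>" using \<open>C \<in> \<C>\<close> unfolding \<A>_def by simp
      thus ?thesis by blast
    qed
    moreover have "\<A> \<subseteq> extents GS MS IS" unfolding \<A>_def by blast
    ultimately have e: "\<Inter>\<A> \<in> extents GS MS IS" by (rule ext_inter)
    have "preim GK \<sigma> (\<Inter>\<A>) = \<Inter>\<C>"
    proof (intro equalityI subsetI)
      fix g assume g: "g \<in> preim GK \<sigma> (\<Inter>\<A>)"
      show "g \<in> \<Inter>\<C>"
      proof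
        fix C assume "C \<in> \<C>"
        hence "C \<in> (\<lambda>A. preim GK \<sigma> A) ` extents GS MS IS" using sub unfolding F_def by blast
        then obtain A where A: "A \<in> extents GS MS IS" "C = preim GK \<sigma> A" by blast
        hence "A \<in> \<A>" using \<open>C \<in> \<C>\<close> unfolding \<A>_def by simp
        hence "\<sigma> g \<in> A" "g \<in> GK" using g unfolding preim_def by auto
        thus "g \<in> C" using A(2) unfolding preim_def by simp
      qed
    next
      fix g assume g: "g \<in> \<Inter>\<C>"
      have "g \<in> GK" using g ne sub FP by blast
      moreover have "\<sigma> g \<in> A" if "A \<in> \<A>" for A
        using that g unfolding \<A>_def preim_def by blast
      ultimately show "g \<in> preim GK \<sigma> (\<Inter>\<A>)" unfolding preim_def by blast
    qed
    moreover have "\<Inter>\<C> \<in> extents GK MK IK" proof (rule ext_inter[OF ne])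
      show "\<C> \<subseteq> extents GK MK IK" using sub unfolding F_def by blast
    qed
    moreover note e
    ultimately have "\<Inter>\<C> \<in> (\<lambda>A. preim GK \<sigma> A) ` extents GS MS IS" "\<Inter>\<C> \<in> extents GK MK IK"
      by (metis image_eqI)+
    thus ?thesis unfolding F_def by (rule IntI)
  qed
  have ext: "extents GK F IT = F" unfolding IT_def by (rule closure_ext[OF FP GKF FI])
  have fin: "finite F" using FP assms(1) unfolding formal_context_def by (metis finite_Pow_iff finite_subset)
  have fc: "formal_context GK F IT" using assms(1) fin FP unfolding formal_context_def IT_def by blast
  have pre: "preim GK id A = A" if "A \<in> F" for A using that FP unfolding preim_def by auto
  have im: "(\<lambda>A. preim GK id A) ` F = F" using pre by (simp add: image_cong)
  have "is_measure GK MK IK GK F IT id"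
    unfolding is_measure_def ext
  proof (intro conjI ballI)
    fix A assume "A \<in> F"
    hence "preim GK id A = A" "A \<in> extents GK MK IK" using pre unfolding F_def by blast+
    thus "preim GK id A \<in> extents GK MK IK" by simp
  qed simp
  hence fin_fact: "formal_context GK F IT \<and> is_measure GK MK IK GK F IT id \<and>
     (\<lambda>A. preim GK id A) ` extents GK F IT = F" using fc ext im by simp
  show ?thesis by (intro exI) (rule fin_fact[unfolded F_def])
qed

end
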